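(* Let $n\ge 6$ and let $\mathfrak g$ be an $n$-dimensional filiform Lie algebra with associated triple $(n-2,n-2,n)$. Then there exist an adapted basis $\{e_1,\dots,e_n\}$ of $\mathfrak g$ and complex numbers $\alpha,\gamma,\beta$ with $\alpha\neq0$ such that the nonzero brackets $[e_a,e_b]$, $a<b$, are exactly given by $[e_1,e_h]=e_{h-1}$ ($3\le h\le n$), $[e_{n-2},e_{n-1}]=\alpha e_2$, $[e_{n-2},e_n]=\alpha e_3+\gamma e_2$, $[e_{n-1},e_n]=\alpha e_4+\gamma e_3+\beta e_2$, all other brackets of basis elements with $a<b$ being zero. Conversely, for every $\alpha\in\mathbb C\setminus\{0\}$ and $\gamma,\beta\in\mathbb C$, these brackets define a Lie algebra which is filiform with associated triple $(n-2,n-2,n)$ (i.e. the Jacobi identity imposes no polynomial relation on $\alpha,\gamma,\beta$, and the only open condition is $\alpha\neq0$, equivalent to $[C^2\mathfrak g,C^3\mathfrak g]\neq\{0\}$).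
   Context: All Lie algebras are over $\mathbb C$; $C^1\mathfrak g=\mathfrak g$, $C^k\mathfrak g=[C^{k-1}\mathfrak g,\mathfrak g]$. A Lie algebra is filiform if $\dim\mathfrak g=n\ge2$ and $\dim C^k\mathfrak g=n-k$ for $2\le k\le n$. An adapted basis of a filiform $\mathfrak g$ is a basis $\{e_1,\dots,e_n\}$ with $[e_1,e_h]=e_{h-1}$ ($3\le h\le n$), $[e_2,e_h]=0$ ($1\le h\le n$), $[e_3,e_h]=0$ ($2\le h\le n$). For a non-model filiform $\mathfrak g$ (not isomorphic to the algebra with $[e_1,e_h]=e_{h-1}$ and other brackets zero), $z_1=\min\{k\ge4:[e_k,e_n]\ne0\}$ and $z_2=\min\{k\ge4:[e_k,e_{k+1}]\ne0\}$ computed in any adapted basis are isomorphism invariants; $(z_1,z_2,n)$ is the associated triple. *)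

theory Defs
  imports Complex_Main
begin

text \<open>An n-dimensional complex vector space is modelled concretely as the space of
  functions nat => complex supported in {1..n} (i.e. C^n).  Every n-dimensional complex Lie algebra is isomorphic to one
  of this form.\<close>

type_synonym cvec = "nat \<Rightarrow> complex"

definition vsp :: "nat \<Rightarrow> cvec set" where
  "vsp n = {v. \<forall>i. v i \<noteq> 0 \<longrightarrow> 1 \<le> i \<and> i \<le> n}"

definition vzero :: cvec where "vzero = (\<lambda>_. 0)"
definition vadd :: "cvec \<Rightarrow> cvec \<Rightarrow> cvec" where "vadd x y = (\<lambda>i. x i + y i)"
definition smul :: "complex \<Rightarrow> cvec \<Rightarrow> cvec" where "smul c x = (\<lambda>i. c * x i)"

definition lcomb :: "('a \<Rightarrow> complex) \<Rightarrow> ('a \<Rightarrow> cvec) \<Rightarrow> 'a set \<Rightarrow> cvec" where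
  "lcomb c e F = (\<lambda>j. \<Sum>x\<in>F. c x * e x j)"

definition cspan :: "cvec set \<Rightarrow> cvec set" where
  "cspan S = {v. \<exists>F c. finite F \<and> F \<subseteq> S \<and> v = lcomb c id F}"

definition cindep :: "cvec set \<Rightarrow> bool" where
  "cindep S \<longleftrightarrow> (\<forall>F c. finite F \<and> F \<subseteq> S \<and> lcomb c id F = vzero \<longrightarrow> (\<forall>x\<in>F. c x = 0))"

definition has_cdim :: "cvec set \<Rightarrow> nat \<Rightarrow> bool" where
  "has_cdim W d \<longleftrightarrow> (\<exists>Bs. finite Bs \<and> card Bs = d \<and> Bs \<subseteq> W \<and> cindep Bs \<and> cspan Bs = W)"

definition lie_alg :: "nat \<Rightarrow> (cvec \<Rightarrow> cvec \<Rightarrow> cvec) \<Rightarrow> bool" where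
  "lie_alg n B \<longleftrightarrow>
     (\<forall>x\<in>vsp n. \<forall>y\<in>vsp n. B x y \<in> vsp n) \<and>
     (\<forall>x\<in>vsp n. \<forall>y\<in>vsp n. \<forall>z\<in>vsp n. B (vadd x y) z = vadd (B x z) (B y z)) \<and>
     (\<forall>x\<in>vsp n. \<forall>y\<in>vsp n. \<forall>z\<in>vsp n. B z (vadd x y) = vadd (B z x) (B z y)) \<and>
     (\<forall>c. \<forall>x\<in>vsp n. \<forall>y\<in>vsp n. B (smul c x) y = smul c (B x y)) \<and>
     (\<forall>c. \<forall>x\<in>vsp n. \<forall>y\<in>vsp n. B x (smul c y) = smul c (B x y)) \<and>
     (\<forall>x\<in>vsp n. B x x = vzero) \<and>
     (\<forall>x\<in>vsp n. \<forall>y\<in>vsp n. \<forall>z\<in>vsp n.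
        vadd (B x (B y z)) (vadd (B y (B z x)) (B z (B x y))) = vzero)"

text \<open>Lower central series: lcs n B k = C^k g (with C^1 g = g, C^k g = [C^(k-1) g, g]).\<close>
fun lcs :: "nat \<Rightarrow> (cvec \<Rightarrow> cvec \<Rightarrow> cvec) \<Rightarrow> nat \<Rightarrow> cvec set" where
  "lcs n B 0 = vsp n"
| "lcs n B (Suc 0) = vsp n"
| "lcs n B (Suc (Suc k)) = cspan {B x y | x y. x \<in> lcs n B (Suc k) \<and> y \<in> vsp n}"

definition filiform :: "nat \<Rightarrow> (cvec \<Rightarrow> cvec \<Rightarrow> cvec) \<Rightarrow> bool" where
  "filiform n B \<longleftrightarrow> n \<ge> 2 \<and> lie_alg n B \<and>
     (\<forall>k. 2 \<le> k \<and> k \<le> n \<longrightarrow> has_cdim (lcs n B k) (n - k))"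

text \<open>Bracket on C^n given by structure constants c i j k: [u_i,u_j] = sum_k c i j k u_k
  on the standard basis u_1..u_n.\<close>
definition sc_bracket :: "nat \<Rightarrow> (nat \<Rightarrow> nat \<Rightarrow> nat \<Rightarrow> complex) \<Rightarrow> cvec \<Rightarrow> cvec \<Rightarrow> cvec" where
  "sc_bracket n c x y = (\<lambda>k. if 1 \<le> k \<and> k \<le> n
       then (\<Sum>i\<in>{1..n}. \<Sum>j\<in>{1..n}. x i * y j * c i j k) else 0)"

definition antisym_sc :: "(nat \<Rightarrow> nat \<Rightarrow> nat \<Rightarrow> complex) \<Rightarrow> nat \<Rightarrow> nat \<Rightarrow> nat \<Rightarrow> complex" where
  "antisym_sc s i j k = (if i < j then s i j k else if j < i then - s j i k else 0)"

definition model_spec :: "nat \<Rightarrow> nat \<Rightarrow> nat \<Rightarrow> complex" where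
  "model_spec a b k = (if a = 1 \<and> 3 \<le> b \<and> k = b - 1 then 1 else 0)"

definition model_br :: "nat \<Rightarrow> cvec \<Rightarrow> cvec \<Rightarrow> cvec" where
  "model_br n = sc_bracket n (antisym_sc model_spec)"

definition lie_iso :: "nat \<Rightarrow> (cvec \<Rightarrow> cvec \<Rightarrow> cvec) \<Rightarrow> (cvec \<Rightarrow> cvec \<Rightarrow> cvec) \<Rightarrow> (cvec \<Rightarrow> cvec) \<Rightarrow> bool" where
  "lie_iso n B B' f \<longleftrightarrow> bij_betw f (vsp n) (vsp n) \<and>
     (\<forall>x\<in>vsp n. \<forall>y\<in>vsp n. f (vadd x y) = vadd (f x) (f y)) \<and>
     (\<forall>c. \<forall>x\<in>vsp n. f (smul c x) = smul c (f x)) \<and>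
     (\<forall>x\<in>vsp n. \<forall>y\<in>vsp n. f (B x y) = B' (f x) (f y))"

definition non_model :: "nat \<Rightarrow> (cvec \<Rightarrow> cvec \<Rightarrow> cvec) \<Rightarrow> bool" where
  "non_model n B \<longleftrightarrow> \<not> (\<exists>f. lie_iso n B (model_br n) f)"

definition adapted_basis :: "nat \<Rightarrow> (cvec \<Rightarrow> cvec \<Rightarrow> cvec) \<Rightarrow> (nat \<Rightarrow> cvec) \<Rightarrow> bool" where
  "adapted_basis n B e \<longleftrightarrow>
     (\<forall>i\<in>{1..n}. e i \<in> vsp n) \<and> inj_on e {1..n} \<and>
     cindep (e ` {1..n}) \<and> cspan (e ` {1..n}) = vsp n \<and>
     (\<forall>h. 3 \<le> h \<and> h \<le> n \<longrightarrow> B (e 1) (e h) = e (h - 1)) \<and>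
     (\<forall>h. 1 \<le> h \<and> h \<le> n \<longrightarrow> B (e 2) (e h) = vzero) \<and>
     (\<forall>h. 2 \<le> h \<and> h \<le> n \<longrightarrow> B (e 3) (e h) = vzero)"

definition is_z1 :: "nat \<Rightarrow> (cvec \<Rightarrow> cvec \<Rightarrow> cvec) \<Rightarrow> (nat \<Rightarrow> cvec) \<Rightarrow> nat \<Rightarrow> bool" where
  "is_z1 n B e m \<longleftrightarrow> 4 \<le> m \<and> B (e m) (e n) \<noteq> vzero \<and>
     (\<forall>k. 4 \<le> k \<and> k < m \<longrightarrow> B (e k) (e n) = vzero)"

definition is_z2 :: "nat \<Rightarrow> (cvec \<Rightarrow> cvec \<Rightarrow> cvec) \<Rightarrow> (nat \<Rightarrow> cvec) \<Rightarrow> nat \<Rightarrow> bool" where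
  "is_z2 n B e m \<longleftrightarrow> 4 \<le> m \<and> B (e m) (e (m + 1)) \<noteq> vzero \<and>
     (\<forall>k. 4 \<le> k \<and> k < m \<longrightarrow> B (e k) (e (k + 1)) = vzero)"

text \<open>Associated triple (z1,z2,n) of a non-model filiform algebra (computed in an adapted
  basis; it is independent of the choice by the standing facts of the paper).\<close>
definition assoc_triple :: "nat \<Rightarrow> (cvec \<Rightarrow> cvec \<Rightarrow> cvec) \<Rightarrow> nat \<Rightarrow> nat \<Rightarrow> bool" where
  "assoc_triple n B a b \<longleftrightarrow> filiform n B \<and> non_model n B \<and>
     (\<exists>e. adapted_basis n B e \<and> is_z1 n B e a \<and> is_z2 n B e b)"

text \<open>Coefficient of e_k in [e_a,e_b] (a < b) in the normal form of the theorem.\<close>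
definition thm_spec :: "nat \<Rightarrow> complex \<Rightarrow> complex \<Rightarrow> complex \<Rightarrow> nat \<Rightarrow> nat \<Rightarrow> nat \<Rightarrow> complex" where
  "thm_spec n \<alpha> \<gamma> \<beta> a b k =
     (if a = 1 \<and> 3 \<le> b \<and> k = b - 1 then 1
      else if a = n - 2 \<and> b = n - 1 then (if k = 2 then \<alpha> else 0)
      else if a = n - 2 \<and> b = n then (if k = 3 then \<alpha> else if k = 2 then \<gamma> else 0)
      else if a = n - 1 \<and> b = n then
        (if k = 4 then \<alpha> else if k = 3 then \<gamma> else if k = 2 then \<beta> else 0)
      else 0)"

end

theory Submission
  imports Defs
begin

definition dl :: "nat \<Rightarrow> nat \<Rightarrow> nat \<Rightarrow> nat \<Rightarrow> complex" where
  "dl a b i j = (if i = a \<and> j = b then 1 else 0)"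

definition ca :: "complex \<Rightarrow> nat \<Rightarrow> complex" where "ca \<alpha> k = (if k = 2 then \<alpha> else 0)"
definition cg :: "complex \<Rightarrow> complex \<Rightarrow> nat \<Rightarrow> complex" where
  "cg \<alpha> \<gamma> k = (if k = 2 then \<gamma> else if k = 3 then \<alpha> else 0)"
definition cb :: "complex \<Rightarrow> complex \<Rightarrow> complex \<Rightarrow> nat \<Rightarrow> complex" where
  "cb \<alpha> \<gamma> \<beta> k = (if k = 2 then \<beta> else if k = 3 then \<gamma> else if k = 4 then \<alpha> else 0)"

definition brf :: "nat \<Rightarrow> complex \<Rightarrow> complex \<Rightarrow> complex \<Rightarrow> cvec \<Rightarrow> cvec \<Rightarrow> cvec" where
  "brf n \<alpha> \<gamma> \<beta> x y k = (if 1 \<le> k \<and> k \<le> n then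
     (if 2 \<le> k \<and> k+1 \<le> n then x 1 * y (k+1) - y 1 * x (k+1) else 0)
     + ca \<alpha> k * (x (n-2) * y (n-1) - y (n-2) * x (n-1))
     + cg \<alpha> \<gamma> k * (x (n-2) * y n - y (n-2) * x n)
     + cb \<alpha> \<gamma> \<beta> k * (x (n-1) * y n - y (n-1) * x n) else 0)"

lemma nf: assumes "n \<ge> (6::nat)" shows "n-1 \<noteq> 2" "n-1\<noteq>3" "n-1\<noteq>4" "n-2\<noteq>2" "n-2\<noteq>3" "n\<noteq>2" "n\<noteq>3" "n\<noteq>4"
  "2 \<le> n-1" "n-1+1 = n" "n-2+1 = n-1" "1 \<le> n-2" "2 \<le> n-2" "n - 2 \<noteq> n - 1" "n - 1 \<noteq> n" "n-2 \<noteq> n"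
  "n-2 \<noteq> 1" "n-1 \<noteq> 1" "n \<noteq> 1" "n-1 \<le> n" "n - 2 \<le> n" "1 \<le> n" "1 \<le> n - 1" "n-1 \<noteq> 0" "n-2 \<noteq> 0" "n \<noteq> 0"
  using assms by auto

lemma brf_1: "brf n \<alpha> \<gamma> \<beta> x y 1 = 0"
  unfolding brf_def ca_def cg_def cb_def using nf[of n] by simp

lemma brf_n: "n \<ge> 6 \<Longrightarrow> brf n \<alpha> \<gamma> \<beta> x y n = 0"
  unfolding brf_def ca_def cg_def cb_def using nf[of n] by simp

lemma brf_n1: "n \<ge> 6 \<Longrightarrow> brf n \<alpha> \<gamma> \<beta> x y (n-1) = x 1 * y n - y 1 * x n"
  unfolding brf_def ca_def cg_def cb_def using nf[of n] by simp

lemma brf_n2: "n \<ge> 6 \<Longrightarrow> brf n \<alpha> \<gamma> \<beta> x y (n-2) = x 1 * y (n-1) - y 1 * x (n-1)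
   + cb \<alpha> \<gamma> \<beta> (n-2) * (x (n-1) * y n - y (n-1) * x n)"
proof -
  assume n: "n \<ge> 6"
  have e: "n - 2 + 1 = n - 1" using n by simp
  show ?thesis using n nf[OF n] unfolding brf_def e ca_def cg_def by simp
qed

lemma brf_k1: "n \<ge> 6 \<Longrightarrow> 2 \<le> k \<Longrightarrow> k + 1 \<le> n \<Longrightarrow> brf n \<alpha> \<gamma> \<beta> x y (k+1) =
   (if k+2 \<le> n then x 1 * y (k+2) - y 1 * x (k+2) else 0)
   + cg \<alpha> \<gamma> (k+1) * (x (n-2) * y n - y (n-2) * x n)
   + cb \<alpha> \<gamma> \<beta> (k+1) * (x (n-1) * y n - y (n-1) * x n)"
  unfolding brf_def ca_def by simp

lemma brf_jacobi:
  assumes n: "n \<ge> 6"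
  shows "brf n \<alpha> \<gamma> \<beta> x (brf n \<alpha> \<gamma> \<beta> y z) k + (brf n \<alpha> \<gamma> \<beta> y (brf n \<alpha> \<gamma> \<beta> z x) k
     + brf n \<alpha> \<gamma> \<beta> z (brf n \<alpha> \<gamma> \<beta> x y) k) = 0"
proof -
  let ?B = "brf n \<alpha> \<gamma> \<beta>"
  consider "k = 0 \<or> k > n" | "k = 1" | "k = 2" | "k = 3" | "k = 4" | "k \<ge> 5 \<and> k \<le> n" by linarith
  then show ?thesis
  proof cases
    case 1
    then show ?thesis unfolding brf_def[of n \<alpha> \<gamma> \<beta> _ _ k] by auto
  next
    case 2
    show ?thesis unfolding 2 brf_1 by simp
  next
    case 3
    have w3: "?B u v 3 = u 1 * v 4 - v 1 * u 4 + \<alpha> * (u (n-2) * v n - v (n-2) * u n)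
       + \<gamma> * (u (n-1) * v n - v (n-1) * u n)" for u v
      using brf_k1[OF n, of 2 \<alpha> \<gamma> \<beta> u v] n by (simp add: cg_def cb_def)
    have k2: "?B u v 2 = u 1 * v 3 - v 1 * u 3 + \<alpha> * (u (n-2) * v (n-1) - v (n-2) * u (n-1))
       + \<gamma> * (u (n-2) * v n - v (n-2) * u n) + \<beta> * (u (n-1) * v n - v (n-1) * u n)" for u v
      using n unfolding brf_def by (simp add: ca_def cg_def cb_def)
    show ?thesis using n unfolding 3 k2 w3 brf_1 brf_n[OF n] brf_n1[OF n] brf_n2[OF n]
      by algebra
  next
    case 4
    have w4: "?B u v 4 = u 1 * v 5 - v 1 * u 5 
       + cb \<alpha> \<gamma> \<beta> 4 * (u (n-1) * v n - v (n-1) * u n)" for u v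
      using brf_k1[OF n, of 3 \<alpha> \<gamma> \<beta> u v] n by (simp add: cg_def)
    have k3: "?B u v 3 = u 1 * v 4 - v 1 * u 4 
       + \<alpha> * (u (n-2) * v n - v (n-2) * u n) + \<gamma> * (u (n-1) * v n - v (n-1) * u n)" for u v
      using n unfolding brf_def by (simp add: ca_def cg_def cb_def)
    have cb4: "cb \<alpha> \<gamma> \<beta> 4 = \<alpha>" by (simp add: cb_def)
    show ?thesis using n unfolding 4 k3 w4 cb4 brf_1 brf_n[OF n] brf_n1[OF n] brf_n2[OF n]
      by algebra
  next
    case 5
    have w5: "?B u v 5 = u 1 * v 6 - v 1 * u 6" for u v
      using brf_k1[OF n, of 4 \<alpha> \<gamma> \<beta> u v] n by (simp add: cg_def cb_def)
    have k4: "?B u v 4 = u 1 * v 5 - v 1 * u 5 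
       + \<alpha> * (u (n-1) * v n - v (n-1) * u n)" for u v
      using n unfolding brf_def by (simp add: ca_def cg_def cb_def)
    show ?thesis using n unfolding 5 k4 w5 brf_1 brf_n[OF n] brf_n1[OF n]
      by algebra
  next
    case 6
    have kk: "?B u v k = (if k+1 \<le> n then u 1 * v (k+1) - v 1 * u (k+1) else 0)" for u v
      using 6 unfolding brf_def by (simp add: ca_def cg_def cb_def)
    show ?thesis
    proof (cases "k + 1 \<le> n")
      case True
      have w: "?B u v (k+1) = (if k+2 \<le> n then u 1 * v (k+2) - v 1 * u (k+2) else 0)" for u v
        using brf_k1[OF n, of k \<alpha> \<gamma> \<beta> u v] 6 True by (simp add: cg_def cb_def)
      show ?thesis unfolding kk w brf_1 using True by (cases "k+2 \<le> n"; simp; algebra)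
    next
      case False
      then show ?thesis unfolding kk by simp
    qed
  qed
qed


lemma decomp_gen:
  fixes p q r :: nat
  assumes "p \<noteq> q" "p \<noteq> r" "q \<noteq> r" "p \<noteq> 1" "q \<noteq> 1" "r \<noteq> 1"
  shows "(if i = 1 \<and> j = k+1 \<and> 2 \<le> k then 1
      else if i = p \<and> j = q then (if k = 2 then \<alpha> else 0)
      else if i = p \<and> j = r then (if k = 3 then \<alpha> else if k = 2 then \<gamma> else 0)
      else if i = q \<and> j = r then
        (if k = 4 then \<alpha> else if k = 3 then \<gamma> else if k = 2 then \<beta> else 0)
      else 0) = (if 2 \<le> k then dl 1 (k+1) i j else 0)
    + ca \<alpha> k * dl p q i j + cg \<alpha> \<gamma> k * dl p r i j + cb \<alpha> \<gamma> \<beta> k * dl q r i j"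
  using assms unfolding dl_def ca_def cg_def cb_def
  by (cases "i = 1"; cases "i = p"; cases "i = q"; simp)

lemma thm_spec_alt:
  "thm_spec n \<alpha> \<gamma> \<beta> i j k =
     (if i = 1 \<and> j = k+1 \<and> 2 \<le> k then 1
      else if i = n - 2 \<and> j = n - 1 then (if k = 2 then \<alpha> else 0)
      else if i = n - 2 \<and> j = n then (if k = 3 then \<alpha> else if k = 2 then \<gamma> else 0)
      else if i = n - 1 \<and> j = n then
        (if k = 4 then \<alpha> else if k = 3 then \<gamma> else if k = 2 then \<beta> else 0)
      else 0)"
proof -
  have c1: "(i = 1 \<and> 3 \<le> j \<and> k = j - 1) = (i = 1 \<and> j = k+1 \<and> 2 \<le> k)" by auto
  show ?thesis unfolding thm_spec_def c1 ..
qed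

lemma thm_spec_decomp:
  assumes "n \<ge> 6"
  shows "thm_spec n \<alpha> \<gamma> \<beta> i j k = (if 2 \<le> k then dl 1 (k+1) i j else 0)
    + ca \<alpha> k * dl (n-2) (n-1) i j + cg \<alpha> \<gamma> k * dl (n-2) n i j + cb \<alpha> \<gamma> \<beta> k * dl (n-1) n i j"
  unfolding thm_spec_alt using nf[OF assms] by (intro decomp_gen) auto

lemma thm_spec_lt:
  assumes "n \<ge> 6" "thm_spec n \<alpha> \<gamma> \<beta> i j k \<noteq> 0"
  shows "i < j"
proof (rule ccontr)
  assume "\<not> i < j"
  then have "j \<le> i" by simp
  then have "thm_spec n \<alpha> \<gamma> \<beta> i j k = 0" using nf[OF assms(1)] unfolding thm_spec_alt
    by auto
  then show False using assms(2) by simp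
qed

lemma antisym_eq:
  assumes "n \<ge> 6"
  shows "antisym_sc (thm_spec n \<alpha> \<gamma> \<beta>) i j k = thm_spec n \<alpha> \<gamma> \<beta> i j k - thm_spec n \<alpha> \<gamma> \<beta> j i k"
proof -
  consider "i < j" | "j < i" | "i = j" by linarith
  then show ?thesis
  proof cases
    case 1
    then have "thm_spec n \<alpha> \<gamma> \<beta> j i k = 0" using thm_spec_lt[OF assms, of \<alpha> \<gamma> \<beta> j i k] by auto
    then show ?thesis using 1 unfolding antisym_sc_def by simp
  next
    case 2
    then have "thm_spec n \<alpha> \<gamma> \<beta> i j k = 0" using thm_spec_lt[OF assms, of \<alpha> \<gamma> \<beta> i j k] by auto
    then show ?thesis using 2 unfolding antisym_sc_def by simp
  next
    case 3
    then show ?thesis unfolding antisym_sc_def by simp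
  qed
qed

lemma mult_delta: "(c::complex) * (if P then 1 else 0) = (if P then c else 0)" by simp

lemma sum_dl:
  "(\<Sum>i\<in>{1..n}. \<Sum>j\<in>{1..n}. x i * y j * dl a b i j) =
     (if 1 \<le> a \<and> a \<le> n \<and> 1 \<le> b \<and> b \<le> n then x a * y b else (0::complex))"
proof -
  have i: "(\<Sum>j\<in>{1..n}. x i * y j * dl a b i j) = (if i = a then (if 1 \<le> b \<and> b \<le> n then x i * y b else 0) else 0)" for i
  proof (cases "i = a")
    case True
    then show ?thesis unfolding dl_def mult_delta by (simp add: sum.delta')
  next
    case False
    then show ?thesis unfolding dl_def by simp
  qed
  show ?thesis unfolding i by (simp add: sum.delta')
qed

lemma Q_closed:
  assumes n: "n \<ge> 6"
  shows "(\<Sum>i\<in>{1..n}. \<Sum>j\<in>{1..n}. x i * y j * thm_spec n \<alpha> \<gamma> \<beta> i j k) =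
    (if 2 \<le> k \<and> k + 1 \<le> n then x 1 * y (k+1) else 0)
    + ca \<alpha> k * (x (n-2) * y (n-1)) + cg \<alpha> \<gamma> k * (x (n-2) * y n) + cb \<alpha> \<gamma> \<beta> k * (x (n-1) * y n)"
proof -
  let ?T = "\<lambda>i j. (if 2 \<le> k then dl 1 (k+1) i j else 0)"
  have e: "x i * y j * thm_spec n \<alpha> \<gamma> \<beta> i j k =
     x i * y j * ?T i j + ca \<alpha> k * (x i * y j * dl (n-2) (n-1) i j)
     + cg \<alpha> \<gamma> k * (x i * y j * dl (n-2) n i j) + cb \<alpha> \<gamma> \<beta> k * (x i * y j * dl (n-1) n i j)" for i j
    unfolding thm_spec_decomp[OF n] by (simp add: algebra_simps)
  have t1: "(\<Sum>i\<in>{1..n}. \<Sum>j\<in>{1..n}. x i * y j * ?T i j) = (if 2 \<le> k \<and> k + 1 \<le> n then x 1 * y (k+1) else 0)"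
  proof (cases "2 \<le> k")
    case True
    then show ?thesis using sum_dl[where a=1 and b="k+1" and n=n and x=x and y=y] n by simp
  next
    case False
    then show ?thesis by simp
  qed
  show ?thesis
    unfolding e sum.distrib sum_distrib_left[symmetric] t1 sum_dl using nf[OF n] by simp
qed

lemma sc_closed:
  assumes n: "n \<ge> 6"
  shows "sc_bracket n (antisym_sc (thm_spec n \<alpha> \<gamma> \<beta>)) x y = brf n \<alpha> \<gamma> \<beta> x y"
proof
  fix k
  have sw: "(\<Sum>i\<in>{1..n}. \<Sum>j\<in>{1..n}. x i * y j * thm_spec n \<alpha> \<gamma> \<beta> j i k)
     = (\<Sum>i\<in>{1..n}. \<Sum>j\<in>{1..n}. y i * x j * thm_spec n \<alpha> \<gamma> \<beta> i j k)"
    by (subst sum.swap) (simp add: mult.commute)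
  have "(\<Sum>i\<in>{1..n}. \<Sum>j\<in>{1..n}. x i * y j * antisym_sc (thm_spec n \<alpha> \<gamma> \<beta>) i j k)
     = (\<Sum>i\<in>{1..n}. \<Sum>j\<in>{1..n}. x i * y j * thm_spec n \<alpha> \<gamma> \<beta> i j k)
     - (\<Sum>i\<in>{1..n}. \<Sum>j\<in>{1..n}. x i * y j * thm_spec n \<alpha> \<gamma> \<beta> j i k)"
    unfolding antisym_eq[OF n] by (simp add: algebra_simps sum_subtractf)
  then have S: "(\<Sum>i\<in>{1..n}. \<Sum>j\<in>{1..n}. x i * y j * antisym_sc (thm_spec n \<alpha> \<gamma> \<beta>) i j k)
     = ((if 2 \<le> k \<and> k + 1 \<le> n then x 1 * y (k+1) else 0)
    + ca \<alpha> k * (x (n-2) * y (n-1)) + cg \<alpha> \<gamma> k * (x (n-2) * y n) + cb \<alpha> \<gamma> \<beta> k * (x (n-1) * y n))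
    - ((if 2 \<le> k \<and> k + 1 \<le> n then y 1 * x (k+1) else 0)
    + ca \<alpha> k * (y (n-2) * x (n-1)) + cg \<alpha> \<gamma> k * (y (n-2) * x n) + cb \<alpha> \<gamma> \<beta> k * (y (n-1) * x n))"
    unfolding sw Q_closed[OF n] .
  show "sc_bracket n (antisym_sc (thm_spec n \<alpha> \<gamma> \<beta>)) x y k = brf n \<alpha> \<gamma> \<beta> x y k"
    unfolding sc_bracket_def S brf_def by (simp add: algebra_simps)
qed


lemma lcomb_empty[simp]: "lcomb c e {} = vzero"
  unfolding lcomb_def vzero_def by simp

lemma lcomb_insert: "finite F \<Longrightarrow> a \<notin> F \<Longrightarrow>
  lcomb c e (insert a F) = vadd (smul (c a) (e a)) (lcomb c e F)"
  unfolding lcomb_def vadd_def smul_def by simp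

lemma vsp_vzero[simp]: "vzero \<in> vsp n" unfolding vsp_def vzero_def by simp
lemma vsp_vadd: "x \<in> vsp n \<Longrightarrow> y \<in> vsp n \<Longrightarrow> vadd x y \<in> vsp n"
  unfolding vsp_def vadd_def
proof (clarify)
  fix i assume "\<forall>i. x i \<noteq> 0 \<longrightarrow> 1 \<le> i \<and> i \<le> n" "\<forall>i. y i \<noteq> 0 \<longrightarrow> 1 \<le> i \<and> i \<le> n" "x i + y i \<noteq> 0"
  moreover have "x i \<noteq> 0 \<or> y i \<noteq> 0" using \<open>x i + y i \<noteq> 0\<close> by auto
  ultimately show "1 \<le> i \<and> i \<le> n" by blast
qed
lemma vsp_smul: "x \<in> vsp n \<Longrightarrow> smul c x \<in> vsp n"
  unfolding vsp_def smul_def by auto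
lemma vsp_lcomb: "(\<And>x. x \<in> F \<Longrightarrow> e x \<in> vsp n) \<Longrightarrow> lcomb c e F \<in> vsp n"
  unfolding vsp_def lcomb_def
proof (clarsimp)
  fix i assume h: "\<And>x. x \<in> F \<Longrightarrow> \<forall>i. e x i \<noteq> 0 \<longrightarrow> Suc 0 \<le> i \<and> i \<le> n"
    and s: "(\<Sum>x\<in>F. c x * e x i) \<noteq> 0"
  show "Suc 0 \<le> i \<and> i \<le> n"
  proof (rule ccontr)
    assume "\<not> (Suc 0 \<le> i \<and> i \<le> n)"
    then have "\<forall>x\<in>F. e x i = 0" using h by auto
    then have "(\<Sum>x\<in>F. c x * e x i) = 0" by simp
    then show False using s by simp
  qed
qed

lemma smul0: "smul 0 x = vzero" unfolding smul_def vzero_def by simp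
lemma vadd0: "vadd vzero x = x" "vadd x vzero = x" unfolding vadd_def vzero_def by auto

lemma lie_closed: "lie_alg n B \<Longrightarrow> x \<in> vsp n \<Longrightarrow> y \<in> vsp n \<Longrightarrow> B x y \<in> vsp n"
  unfolding lie_alg_def by (elim conjE) (drule bspec, assumption, drule bspec, assumption)
lemma lie_addl: "lie_alg n B \<Longrightarrow> x \<in> vsp n \<Longrightarrow> y \<in> vsp n \<Longrightarrow> z \<in> vsp n \<Longrightarrow> B (vadd x y) z = vadd (B x z) (B y z)"
  unfolding lie_alg_def by (elim conjE) (drule bspec, assumption, drule bspec, assumption, drule bspec, assumption)
lemma lie_addr: "lie_alg n B \<Longrightarrow> x \<in> vsp n \<Longrightarrow> y \<in> vsp n \<Longrightarrow> z \<in> vsp n \<Longrightarrow> B z (vadd x y) = vadd (B z x) (B z y)"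
  unfolding lie_alg_def by (elim conjE) (drule bspec, assumption, drule bspec, assumption, drule bspec, assumption)
lemma lie_smull: "lie_alg n B \<Longrightarrow> x \<in> vsp n \<Longrightarrow> y \<in> vsp n \<Longrightarrow> B (smul c x) y = smul c (B x y)"
  unfolding lie_alg_def by (elim conjE) (drule spec[where x=c], drule bspec, assumption, drule bspec, assumption)
lemma lie_smulr: "lie_alg n B \<Longrightarrow> x \<in> vsp n \<Longrightarrow> y \<in> vsp n \<Longrightarrow> B x (smul c y) = smul c (B x y)"
  unfolding lie_alg_def by (elim conjE) (drule spec[where x=c], drule bspec, assumption, drule bspec, assumption)
lemma lie_self: "lie_alg n B \<Longrightarrow> x \<in> vsp n \<Longrightarrow> B x x = vzero"
  unfolding lie_alg_def by (elim conjE) (drule bspec, assumption)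
lemma lie_jac0: "lie_alg n B \<Longrightarrow> x \<in> vsp n \<Longrightarrow> y \<in> vsp n \<Longrightarrow> z \<in> vsp n \<Longrightarrow>
   vadd (B x (B y z)) (vadd (B y (B z x)) (B z (B x y))) = vzero"
  unfolding lie_alg_def by (elim conjE) (drule bspec, assumption, drule bspec, assumption, drule bspec, assumption)

lemma lie_zero_r: assumes "lie_alg n B" "x \<in> vsp n" shows "B x vzero = vzero"
proof -
  have "B x (smul 0 vzero) = smul 0 (B x vzero)" using lie_smulr[OF assms vsp_vzero] .
  then show ?thesis by (simp add: smul0)
qed

lemma lie_zero_l: assumes "lie_alg n B" "x \<in> vsp n" shows "B vzero x = vzero"
proof -
  have "B (smul 0 vzero) x = smul 0 (B vzero x)" using lie_smull[OF assms(1) vsp_vzero assms(2)] .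
  then show ?thesis by (simp add: smul0)
qed

lemma lie_antisym: assumes L: "lie_alg n B" and x: "x \<in> vsp n" and y: "y \<in> vsp n"
  shows "B y x i = - B x y i"
proof -
  have xy: "vadd x y \<in> vsp n" using x y by (rule vsp_vadd)
  have "B (vadd x y) (vadd x y) = vzero" using lie_self[OF L xy] .
  moreover have "B (vadd x y) (vadd x y) = vadd (vadd (B x x) (B x y)) (vadd (B y x) (B y y))"
    using lie_addl[OF L x y xy] lie_addr[OF L x y x] lie_addr[OF L x y y] by simp
  moreover have "B x x = vzero" "B y y = vzero" using lie_self[OF L] x y by auto
  ultimately have "vadd (B x y) (B y x) = vzero" by (simp add: vadd0)
  then have "B x y i + B y x i = 0" unfolding vadd_def vzero_def by meson
  then show ?thesis by (simp add: eq_neg_iff_add_eq_0 add.commute)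
qed

lemma lie_jacobi: assumes L: "lie_alg n B" and "x \<in> vsp n" "y \<in> vsp n" "z \<in> vsp n"
  shows "B x (B y z) i + (B y (B z x) i + B z (B x y) i) = 0"
proof -
  have "vadd (B x (B y z)) (vadd (B y (B z x)) (B z (B x y))) = vzero"
    using lie_jac0[OF assms] .
  then show ?thesis unfolding vadd_def vzero_def by meson
qed

lemma lie_lcomb_r:
  assumes L: "lie_alg n B" and x: "x \<in> vsp n" and F: "finite F" and e: "\<And>k. k \<in> F \<Longrightarrow> e k \<in> vsp n"
  shows "B x (lcomb c e F) = lcomb c (\<lambda>k. B x (e k)) F"
  using F e
proof (induction F rule: finite_induct)
  case empty
  then show ?case using lie_zero_r[OF L x] by simp
next
  case (insert a F)
  have ea: "e a \<in> vsp n" using insert by simp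
  have lF: "lcomb c e F \<in> vsp n" using insert by (intro vsp_lcomb) auto
  have "B x (lcomb c e (insert a F)) = B x (vadd (smul (c a) (e a)) (lcomb c e F))"
    using insert by (simp add: lcomb_insert)
  also have "\<dots> = vadd (B x (smul (c a) (e a))) (B x (lcomb c e F))"
    using lie_addr[OF L vsp_smul[OF ea] lF x] .
  also have "B x (smul (c a) (e a)) = smul (c a) (B x (e a))"
    using lie_smulr[OF L x ea] .
  also have "B x (lcomb c e F) = lcomb c (\<lambda>k. B x (e k)) F" using insert by simp
  finally show ?case using insert by (simp add: lcomb_insert)
qed

lemma lcomb_reindex:
  assumes "inj_on e J"
  shows "lcomb c e J = lcomb (\<lambda>x. c (inv_into J e x)) id (e ` J)"
  unfolding lcomb_def using assms by (simp add: sum.reindex)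

lemma lcomb_in_cspan:
  assumes "finite J" "inj_on e J" "e ` J \<subseteq> S"
  shows "lcomb c e J \<in> cspan S"
  unfolding cspan_def using assms lcomb_reindex[OF assms(2)] by blast

lemma basis_rep:
  assumes inj: "inj_on e {1..n}" and sp: "cspan (e ` {1..n}) = vsp n" and v: "v \<in> vsp n"
  shows "\<exists>d. v = lcomb d e {1..n}"
proof -
  obtain F c where F: "finite F" "F \<subseteq> e ` {1..n}" "v = lcomb c id F"
    using v sp[symmetric] unfolding cspan_def by blast
  define d where "d k = (if e k \<in> F then c (e k) else 0)" for k
  have "lcomb d e {1..n} = lcomb c id F"
  proof
    fix j
    have "lcomb d e {1..n} j = (\<Sum>k\<in>{1..n}. (\<lambda>x. if x \<in> F then c x * x j else 0) (e k))"
      unfolding lcomb_def d_def by (intro sum.cong) auto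
    also have "\<dots> = (\<Sum>x\<in>e ` {1..n}. (if x \<in> F then c x * x j else 0))"
      using inj by (simp add: sum.reindex)
    also have "\<dots> = (\<Sum>x\<in>e ` {1..n} \<inter> F. c x * x j)"
      by (simp add: sum.inter_restrict)
    also have "e ` {1..n} \<inter> F = F" using F by blast
    finally show "lcomb d e {1..n} j = lcomb c id F j" unfolding lcomb_def by simp
  qed
  then show ?thesis using F by metis
qed

lemma basis_uniq0:
  fixes n :: nat
  assumes inj: "inj_on e {1..n}" and ind: "cindep (e ` {1..n})"
    and z: "lcomb c e {1..n} = vzero" and k: "k \<in> {1..n}"
  shows "c k = 0"
proof -
  define c' where "c' x = c (inv_into {1..n} e x)" for x
  have "lcomb c' id (e ` {1..n}) = lcomb c e {1..n}"
    using lcomb_reindex[OF inj, of c] unfolding c'_def by (rule sym)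
  then have "lcomb c' id (e ` {1..n}) = vzero" using z by (rule trans)
  then have h: "finite (e ` {1..n}) \<and> e ` {1..n} \<subseteq> e ` {1..n} \<and> lcomb c' id (e ` {1..n}) = vzero" by auto
  have "c' (e k) = 0" using ind[unfolded cindep_def, rule_format, OF h] k by simp
  then show ?thesis unfolding c'_def using inv_into_f_f[OF inj k] by simp
qed

lemma lcomb_diff: "lcomb (\<lambda>k. c k - d k) e F = (\<lambda>j. lcomb c e F j - lcomb d e F j)"
  unfolding lcomb_def by (simp add: algebra_simps sum_subtractf)

lemma basis_uniq:
  fixes n :: nat
  assumes inj: "inj_on e {1..n}" and ind: "cindep (e ` {1..n})"
    and z: "lcomb c e {1..n} = lcomb d e {1..n}" and k: "k \<in> {1..n}"
  shows "c k = d k"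
proof -
  have "lcomb (\<lambda>k. c k - d k) e {1..n} = vzero" unfolding lcomb_diff z vzero_def by simp
  then have "c k - d k = 0" using basis_uniq0[OF inj ind _ k] by blast
  then show ?thesis by simp
qed

lemma lcomb_cong: "(\<And>k. k \<in> F \<Longrightarrow> c k = d k) \<Longrightarrow> lcomb c e F = lcomb d e F"
  unfolding lcomb_def by (intro ext sum.cong) auto

lemma lcomb_zero: "(\<And>k. k \<in> F \<Longrightarrow> c k = 0) \<Longrightarrow> lcomb c e F = vzero"
  unfolding lcomb_def vzero_def by (intro ext sum.neutral) auto


lemma ad_vsp: "adapted_basis n B e \<Longrightarrow> i \<in> {1..n} \<Longrightarrow> e i \<in> vsp n"
  unfolding adapted_basis_def by blast
lemma ad_inj: "adapted_basis n B e \<Longrightarrow> inj_on e {1..n}"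
  unfolding adapted_basis_def by blast
lemma ad_ind: "adapted_basis n B e \<Longrightarrow> cindep (e ` {1..n})"
  unfolding adapted_basis_def by blast
lemma ad_span: "adapted_basis n B e \<Longrightarrow> cspan (e ` {1..n}) = vsp n"
  unfolding adapted_basis_def by blast
lemma ad_e1: "adapted_basis n B e \<Longrightarrow> 3 \<le> h \<Longrightarrow> h \<le> n \<Longrightarrow> B (e 1) (e h) = e (h - 1)"
  unfolding adapted_basis_def by blast
lemma ad_e2: "adapted_basis n B e \<Longrightarrow> 1 \<le> h \<Longrightarrow> h \<le> n \<Longrightarrow> B (e 2) (e h) = vzero"
  unfolding adapted_basis_def by blast
lemma ad_e3: "adapted_basis n B e \<Longrightarrow> 2 \<le> h \<Longrightarrow> h \<le> n \<Longrightarrow> B (e 3) (e h) = vzero"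
  unfolding adapted_basis_def by blast

locale fwd =
  fixes n :: nat and B :: "cvec \<Rightarrow> cvec \<Rightarrow> cvec" and e :: "nat \<Rightarrow> cvec"
  assumes n6: "n \<ge> 6" and L: "lie_alg n B" and ad: "adapted_basis n B e"
    and z1: "is_z1 n B e (n-2)" and z2: "is_z2 n B e (n-2)"
begin

lemma ev: "1 \<le> i \<Longrightarrow> i \<le> n \<Longrightarrow> e i \<in> vsp n" using ad_vsp[OF ad] by auto

lemma e1e1: "B (e 1) (e 1) = vzero" using lie_self[OF L ev] n6 by simp

lemma e1e2: "B (e 1) (e 2) = vzero"
proof
  fix i
  have "B (e 1) (e 2) i = - B (e 2) (e 1) i" using lie_antisym[OF L, of "e 2" "e 1"] ev n6 by simp
  then show "B (e 1) (e 2) i = vzero i" using ad_e2[OF ad, of 1] n6 by (simp add: vzero_def)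
qed

lemma eje1: "3 \<le> j \<Longrightarrow> j \<le> n \<Longrightarrow> B (e j) (e 1) = smul (-1) (e (j-1))"
proof
  fix i assume j: "3 \<le> j" "j \<le> n"
  have "B (e j) (e 1) i = - B (e 1) (e j) i" using lie_antisym[OF L, of "e 1" "e j"] ev j by simp
  then show "B (e j) (e 1) i = smul (-1) (e (j-1)) i" using ad_e1[OF ad j] by (simp add: smul_def)
qed

lemma e3e1: "B (e 3) (e 1) = smul (-1) (e 2)" using eje1[of 3] n6 by simp

lemma ehe3: "2 \<le> h \<Longrightarrow> h \<le> n \<Longrightarrow> B (e h) (e 3) = vzero"
proof
  fix i assume h: "2 \<le> h" "h \<le> n"
  have "B (e h) (e 3) i = - B (e 3) (e h) i" using lie_antisym[OF L, of "e 3" "e h"] ev h n6 by simp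
  then show "B (e h) (e 3) i = vzero i" using ad_e3[OF ad h] by (simp add: vzero_def)
qed

lemma deriv:
  assumes k: "3 \<le> k" "k \<le> n" and j: "3 \<le> j" "j \<le> n"
  shows "B (e 1) (B (e k) (e j)) i = B (e (k-1)) (e j) i + B (e k) (e (j-1)) i"
proof -
  have J: "B (e 1) (B (e k) (e j)) i + (B (e k) (B (e j) (e 1)) i + B (e j) (B (e 1) (e k)) i) = 0"
    using lie_jacobi[OF L, of "e 1" "e k" "e j"] ev k j by simp
  have a: "B (e k) (B (e j) (e 1)) i = - B (e k) (e (j-1)) i"
    unfolding eje1[OF j] using lie_smulr[OF L, of "e k" "e (j-1)" "-1"] ev k j by (simp add: smul_def)
  have b: "B (e j) (B (e 1) (e k)) i = - B (e (k-1)) (e j) i"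
    unfolding ad_e1[OF ad k] using lie_antisym[OF L, of "e (k-1)" "e j"] ev k j by simp
  show ?thesis using J unfolding a b by (simp add: algebra_simps)
qed

lemma zero_step:
  "\<forall>k. 2 \<le> k \<and> k \<le> n - 3 \<and> k < n - m \<longrightarrow> B (e k) (e (n - m)) = vzero"
proof (induction m)
  case 0
  show ?case
  proof (intro allI impI)
    fix k assume k: "2 \<le> k \<and> k \<le> n - 3 \<and> k < n - 0"
    consider "k = 2" | "k = 3" | "4 \<le> k" using k by linarith
    then show "B (e k) (e (n - 0)) = vzero"
    proof cases
      case 1 then show ?thesis using ad_e2[OF ad, of n] n6 by simp
    next
      case 2 then show ?thesis using ad_e3[OF ad, of n] n6 by simp
    next
      case 3 then show ?thesis using z1 k n6 unfolding is_z1_def by auto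
    qed
  qed
next
  case (Suc m)
  show ?case
  proof (intro allI impI)
    fix k assume k: "2 \<le> k \<and> k \<le> n - 3 \<and> k < n - Suc m"
    define j where "j = n - Suc m"
    have jj: "n - m = j + 1" "j + 1 \<le> n" "k < j" using k unfolding j_def by auto
    show "B (e k) (e (n - Suc m)) = vzero"
    proof (cases "k = 2")
      case True
      then show ?thesis using ad_e2[OF ad, of "n - Suc m"] k by simp
    next
      case False
      then have k3: "3 \<le> k" using k by simp
      have ih1: "B (e k) (e (j+1)) = vzero" using Suc.IH k jj by auto
      have "2 \<le> k-1 \<and> k-1 \<le> n-3 \<and> k-1 < n - m" using k k3 jj by auto
      then have "B (e (k-1)) (e (n - m)) = vzero" using Suc.IH by blast
      then have ih2: "B (e (k-1)) (e (j+1)) = vzero" unfolding jj(1) .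
      show ?thesis
      proof
        fix i
        have "B (e 1) (B (e k) (e (j+1))) i = B (e (k-1)) (e (j+1)) i + B (e k) (e j) i"
          using deriv[of k "j+1" i] k3 jj k by simp
        moreover have "B (e 1) (B (e k) (e (j+1))) i = 0"
          unfolding ih1 using lie_zero_r[OF L ev, of 1] n6 by (simp add: vzero_def)
        ultimately show "B (e k) (e (n - Suc m)) i = vzero i"
          unfolding ih2 j_def[symmetric] by (simp add: vzero_def)
      qed
    qed
  qed
qed

lemma zero_br: "2 \<le> k \<Longrightarrow> k \<le> n - 3 \<Longrightarrow> k < j \<Longrightarrow> j \<le> n \<Longrightarrow> B (e k) (e j) = vzero"
  using zero_step[of "n - j"] by auto

lemma sum_shift:
  "(\<Sum>k\<in>{1..n}. c k * (if 3 \<le> k then e (k-1) j else 0))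
   = (\<Sum>k\<in>{1..n}. (if k+1 \<le> n \<and> 2 \<le> k then c (k+1) else 0) * e k j)"
proof -
  have "(\<Sum>k\<in>{1..n}. c k * (if 3 \<le> k then e (k-1) j else 0))
      = (\<Sum>k\<in>{1..n}. if 3 \<le> k then c k * e (k-1) j else 0)" by (intro sum.cong) auto
  also have "\<dots> = (\<Sum>k\<in>{k\<in>{1..n}. 3 \<le> k}. c k * e (k-1) j)" by (rule sum.inter_filter[symmetric]) simp
  also have "{k\<in>{1..n}. 3 \<le> k} = {Suc 2..Suc (n-1)}" using n6 by auto
  also have "(\<Sum>k\<in>{Suc 2..Suc (n-1)}. c k * e (k-1) j) = (\<Sum>k\<in>{2..n-1}. c (Suc k) * e k j)"
    by (subst sum.shift_bounds_cl_Suc_ivl) simp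
  also have "{2..n-1} = {k\<in>{1..n}. k+1 \<le> n \<and> 2 \<le> k}" using n6 by auto
  also have "(\<Sum>k\<in>{k\<in>{1..n}. k+1 \<le> n \<and> 2 \<le> k}. c (Suc k) * e k j)
     = (\<Sum>k\<in>{1..n}. if k+1 \<le> n \<and> 2 \<le> k then c (Suc k) * e k j else 0)" by (rule sum.inter_filter) simp
  also have "\<dots> = (\<Sum>k\<in>{1..n}. (if k+1 \<le> n \<and> 2 \<le> k then c (k+1) else 0) * e k j)"
    by (intro sum.cong) auto
  finally show ?thesis .
qed

lemma shift:
  "B (e 1) (lcomb c e {1..n}) = lcomb (\<lambda>k. if k+1 \<le> n \<and> 2 \<le> k then c (k+1) else 0) e {1..n}"
proof -
  have "B (e 1) (lcomb c e {1..n}) = lcomb c (\<lambda>k. B (e 1) (e k)) {1..n}"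
    by (rule lie_lcomb_r[OF L]) (use ev n6 in auto)
  also have "\<dots> = lcomb c (\<lambda>k. (\<lambda>j. if 3 \<le> k then e (k-1) j else 0)) {1..n}"
    unfolding lcomb_def
  proof (intro ext sum.cong refl)
    fix j k assume k: "k \<in> {1..n}"
    have "1 \<le> k" using k by simp
    then consider "k = 1" | "k = 2" | "3 \<le> k" by linarith
    then show "c k * B (e 1) (e k) j = c k * (if 3 \<le> k then e (k-1) j else 0)"
    proof cases
      case 1 then show ?thesis using e1e1 by (simp add: vzero_def)
    next
      case 2 then show ?thesis using e1e2 by (simp add: vzero_def)
    next
      case 3 then show ?thesis using ad_e1[OF ad 3] k by simp
    qed
  qed
  also have "\<dots> = lcomb (\<lambda>k. if k+1 \<le> n \<and> 2 \<le> k then c (k+1) else 0) e {1..n}"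
    unfolding lcomb_def using sum_shift by simp
  finally show ?thesis .
qed

lemma e3comb:
  "B (e 3) (lcomb c e {1..n}) = lcomb (\<lambda>k. if k = 2 then - c 1 else 0) e {1..n}"
proof -
  have "B (e 3) (lcomb c e {1..n}) = lcomb c (\<lambda>k. B (e 3) (e k)) {1..n}"
    by (rule lie_lcomb_r[OF L]) (use ev n6 in auto)
  also have "\<dots> = lcomb (\<lambda>k. if k = 2 then - c 1 else 0) e {1..n}"
    unfolding lcomb_def
  proof
    fix j
    have "(\<Sum>k\<in>{1..n}. c k * B (e 3) (e k) j) = (\<Sum>k\<in>{1..n}. if k = 1 then - c 1 * e 2 j else 0)"
    proof (intro sum.cong refl)
      fix k assume k: "k \<in> {1..n}"
      show "c k * B (e 3) (e k) j = (if k = 1 then - c 1 * e 2 j else 0)"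
      proof (cases "k = 1")
        case True then show ?thesis using e3e1 by (simp add: smul_def)
      next
        case False then show ?thesis using ad_e3[OF ad, of k] k by (simp add: vzero_def)
      qed
    qed
    also have "\<dots> = - c 1 * e 2 j" using n6 by (simp add: sum.delta)
    also have "\<dots> = (\<Sum>k\<in>{1..n}. (if k = 2 then - c 1 else 0) * e k j)"
      using n6 by (simp add: sum.delta if_distrib[where f="\<lambda>x. x * e _ j"] cong: if_cong)
    finally show "(\<Sum>k\<in>{1..n}. c k * B (e 3) (e k) j) = (\<Sum>k\<in>{1..n}. (if k = 2 then - c 1 else 0) * e k j)" .
  qed
  finally show ?thesis .
qed

end


lemma ts_1: "n \<ge> 6 \<Longrightarrow> thm_spec n \<alpha> \<gamma> \<beta> 1 b k = (if 3 \<le> b \<and> k = b - 1 then 1 else 0)"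
proof -
  assume "n \<ge> 6"
  then have "(1::nat) \<noteq> n - 2" "(1::nat) \<noteq> n - 1" by auto
  then show ?thesis unfolding thm_spec_def by simp
qed
lemma ts_mid: "n \<ge> 6 \<Longrightarrow> a \<noteq> 1 \<Longrightarrow> a \<noteq> n-2 \<Longrightarrow> a \<noteq> n-1 \<Longrightarrow> thm_spec n \<alpha> \<gamma> \<beta> a b k = 0"
  unfolding thm_spec_def by simp
lemma ts_X: "n \<ge> 6 \<Longrightarrow> thm_spec n \<alpha> \<gamma> \<beta> (n-2) (n-1) k = (if k = 2 then \<alpha> else 0)"
proof -
  assume "n \<ge> 6"
  then have "n - 2 \<noteq> (1::nat)" by auto
  then show ?thesis unfolding thm_spec_def by simp
qed
lemma ts_Y: "n \<ge> 6 \<Longrightarrow> thm_spec n \<alpha> \<gamma> \<beta> (n-2) n k = (if k = 3 then \<alpha> else if k = 2 then \<gamma> else 0)"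
proof -
  assume "n \<ge> 6"
  then have "n - 2 \<noteq> (1::nat)" "n \<noteq> n - 1" by auto
  then show ?thesis unfolding thm_spec_def by simp
qed
lemma ts_Z: "n \<ge> 6 \<Longrightarrow> thm_spec n \<alpha> \<gamma> \<beta> (n-1) n k = (if k = 4 then \<alpha> else if k = 3 then \<gamma> else if k = 2 then \<beta> else 0)"
proof -
  assume "n \<ge> 6"
  then have "n - 1 \<noteq> (1::nat)" "n - 1 \<noteq> n - 2" by auto
  then show ?thesis unfolding thm_spec_def by simp
qed

lemma shift_back:
  assumes "3 \<le> k" "k \<le> (n::nat)"
  shows "(if k - 1 + 1 \<le> n \<and> 2 \<le> k - 1 then c (k - 1 + 1) else (0::complex)) = c k"
proof -
  have "k - 1 + 1 = k" "2 \<le> k - 1" "k - 1 + 1 \<le> n" using assms by auto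
  then show ?thesis by simp
qed

context fwd
begin

lemma E3: assumes "2 \<le> a" "a \<le> n" "2 \<le> b" "b \<le> n" shows "B (e 3) (B (e a) (e b)) = vzero"
proof
  fix i
  have J: "B (e 3) (B (e a) (e b)) i + (B (e a) (B (e b) (e 3)) i + B (e b) (B (e 3) (e a)) i) = 0"
    using lie_jacobi[OF L, of "e 3" "e a" "e b"] ev assms n6 by simp
  have "B (e a) (B (e b) (e 3)) = vzero" unfolding ehe3[OF assms(3,4)] using lie_zero_r[OF L ev] assms by simp
  moreover have "B (e b) (B (e 3) (e a)) = vzero" unfolding ad_e3[OF ad assms(1,2)] using lie_zero_r[OF L ev] assms by simp
  ultimately show "B (e 3) (B (e a) (e b)) i = vzero i" using J by (simp add: vzero_def)
qed

lemma rep: "v \<in> vsp n \<Longrightarrow> \<exists>c. v = lcomb c e {1..n}"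
  using basis_rep[OF ad_inj[OF ad] ad_span[OF ad]] by blast

lemma uniq0: "lcomb c e {1..n} = vzero \<Longrightarrow> k \<in> {1..n} \<Longrightarrow> c k = 0"
  using basis_uniq0[OF ad_inj[OF ad] ad_ind[OF ad]] by blast

lemma uniq: "lcomb c e {1..n} = lcomb d e {1..n} \<Longrightarrow> k \<in> {1..n} \<Longrightarrow> c k = d k"
  using basis_uniq[OF ad_inj[OF ad] ad_ind[OF ad]] by blast

lemma dvsp: "1 \<le> a \<Longrightarrow> a \<le> n \<Longrightarrow> 1 \<le> b \<Longrightarrow> b \<le> n \<Longrightarrow> B (e a) (e b) \<in> vsp n"
  using lie_closed[OF L ev ev] by blast

lemma c1_zero:
  assumes "2 \<le> a" "a \<le> n" "2 \<le> b" "b \<le> n" "B (e a) (e b) = lcomb c e {1..n}"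
  shows "c 1 = 0"
proof -
  have "lcomb (\<lambda>k. if k = 2 then - c 1 else 0) e {1..n} = vzero"
    using E3[OF assms(1-4)] unfolding assms(5) e3comb .
  then have "(\<lambda>k. if k = (2::nat) then - c 1 else 0) 2 = 0" using uniq0[of "\<lambda>k. if k = 2 then - c 1 else 0" 2] n6 by simp
  then show ?thesis by simp
qed

lemma fwd_main:
  "\<exists>\<alpha> \<gamma> \<beta>. \<alpha> \<noteq> 0 \<and> (\<forall>a b. 1 \<le> a \<and> a < b \<and> b \<le> n \<longrightarrow>
      B (e a) (e b) = lcomb (thm_spec n \<alpha> \<gamma> \<beta> a b) e {1..n})"
proof -
  let ?I = "{1..n}"
  let ?sh = "\<lambda>c k. if k+1 \<le> n \<and> 2 \<le> k then c (k+1) else (0::complex)"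
  have nn: "n - 2 - 1 = n - 3" "n - 1 - 1 = n - 2" "2 \<le> n - 3" "n - 3 < n - 1" "n-3 < n" using n6 by auto
  have "B (e (n-2)) (e (n-1)) \<in> vsp n" using dvsp n6 by simp
  then obtain cX where hX: "B (e (n-2)) (e (n-1)) = lcomb cX e ?I" using rep by blast
  have "B (e (n-2)) (e n) \<in> vsp n" using dvsp n6 by simp
  then obtain cY where hY: "B (e (n-2)) (e n) = lcomb cY e ?I" using rep by blast
  have "B (e (n-1)) (e n) \<in> vsp n" using dvsp n6 by simp
  then obtain cZ where hZ: "B (e (n-1)) (e n) = lcomb cZ e ?I" using rep by blast
  have DX: "B (e 1) (B (e (n-2)) (e (n-1))) = vzero"
  proof
    fix i
    have "B (e 1) (B (e (n-2)) (e (n-1))) i = B (e (n-3)) (e (n-1)) i + B (e (n-2)) (e (n-2)) i"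
      using deriv[of "n-2" "n-1" i] n6 nn by simp
    then show "B (e 1) (B (e (n-2)) (e (n-1))) i = vzero i"
      using zero_br[of "n-3" "n-1"] lie_self[OF L ev[of "n-2"]] nn n6 by (simp add: vzero_def)
  qed
  have DY: "B (e 1) (B (e (n-2)) (e n)) = B (e (n-2)) (e (n-1))"
  proof
    fix i
    have "B (e 1) (B (e (n-2)) (e n)) i = B (e (n-3)) (e n) i + B (e (n-2)) (e (n-1)) i"
      using deriv[of "n-2" "n" i] n6 nn by simp
    then show "B (e 1) (B (e (n-2)) (e n)) i = B (e (n-2)) (e (n-1)) i"
      using zero_br[of "n-3" "n"] nn n6 by (simp add: vzero_def)
  qed
  have DZ: "B (e 1) (B (e (n-1)) (e n)) = B (e (n-2)) (e n)"
  proof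
    fix i
    have "B (e 1) (B (e (n-1)) (e n)) i = B (e (n-2)) (e n) i + B (e (n-1)) (e (n-1)) i"
      using deriv[of "n-1" "n" i] n6 nn by simp
    then show "B (e 1) (B (e (n-1)) (e n)) i = B (e (n-2)) (e n) i"
      using lie_self[OF L ev[of "n-1"]] nn n6 by (simp add: vzero_def)
  qed
  have lX: "lcomb (?sh cX) e ?I = vzero" using DX unfolding hX shift .
  have shX: "?sh cX k = 0" if "k \<in> ?I" for k using uniq0[OF lX that] .
  have lY: "lcomb (?sh cY) e ?I = lcomb cX e ?I" using DY unfolding hX hY shift .
  have shY: "?sh cY k = cX k" if "k \<in> ?I" for k using uniq[OF lY that] .
  have lZ: "lcomb (?sh cZ) e ?I = lcomb cY e ?I" using DZ unfolding hZ hY shift .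
  have shZ: "?sh cZ k = cY k" if "k \<in> ?I" for k using uniq[OF lZ that] .
  have X1: "cX 1 = 0" using c1_zero[OF _ _ _ _ hX] n6 by simp
  have Y1: "cY 1 = 0" using c1_zero[OF _ _ _ _ hY] n6 by simp
  have Z1: "cZ 1 = 0" using c1_zero[OF _ _ _ _ hZ] n6 by simp
  define \<alpha> where "\<alpha> = cX 2"
  define \<gamma> where "\<gamma> = cY 2"
  define \<beta> where "\<beta> = cZ 2"
  have k1I: "k - 1 \<in> ?I" if "3 \<le> k" "k \<le> n" for k using that by auto
  have cXv: "cX k = (if k = 2 then \<alpha> else 0)" if k: "k \<in> ?I" for k
  proof -
    consider "k = 1" | "k = 2" | "3 \<le> k" using k by fastforce
    then show ?thesis
    proof cases
      case 1 then show ?thesis using X1 by simp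
    next
      case 2 then show ?thesis unfolding \<alpha>_def by simp
    next
      case 3
      have "cX k = 0" using shX[OF k1I[OF 3]] shift_back[OF 3 _, where c=cX and n=n] k by simp
      then show ?thesis using 3 by simp
    qed
  qed
  have cYv: "cY k = (if k = 3 then \<alpha> else if k = 2 then \<gamma> else 0)" if k: "k \<in> ?I" for k
  proof -
    consider "k = 1" | "k = 2" | "3 \<le> k" using k by fastforce
    then show ?thesis
    proof cases
      case 1 then show ?thesis using Y1 by simp
    next
      case 2 then show ?thesis unfolding \<gamma>_def by simp
    next
      case 3
      have "cY k = cX (k - 1)" using shY[OF k1I[OF 3]] shift_back[OF 3 _, where c=cY and n=n] k by simp
      also have "\<dots> = (if k - 1 = 2 then \<alpha> else 0)" using cXv[OF k1I[OF 3]] k by simp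
      finally show ?thesis using 3 by auto
    qed
  qed
  have cZv: "cZ k = (if k = 4 then \<alpha> else if k = 3 then \<gamma> else if k = 2 then \<beta> else 0)" if k: "k \<in> ?I" for k
  proof -
    consider "k = 1" | "k = 2" | "3 \<le> k" using k by fastforce
    then show ?thesis
    proof cases
      case 1 then show ?thesis using Z1 by simp
    next
      case 2 then show ?thesis unfolding \<beta>_def by simp
    next
      case 3
      have "cZ k = cY (k - 1)" using shZ[OF k1I[OF 3]] shift_back[OF 3 _, where c=cZ and n=n] k by simp
      also have "\<dots> = (if k - 1 = 3 then \<alpha> else if k - 1 = 2 then \<gamma> else 0)" using cYv[OF k1I[OF 3]] k by simp
      finally show ?thesis using 3 by auto
    qed
  qed
  have a0: "\<alpha> \<noteq> 0"
  proof
    assume "\<alpha> = 0"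
    then have "lcomb cX e ?I = vzero" using cXv by (intro lcomb_zero) auto
    then have "B (e (n-2)) (e (n-2+1)) = vzero" using hX nf(11)[OF n6] by simp
    then show False using z2 unfolding is_z2_def by blast
  qed
  have main: "B (e a) (e b) = lcomb (thm_spec n \<alpha> \<gamma> \<beta> a b) e ?I" if ab: "1 \<le> a" "a < b" "b \<le> n" for a b
  proof -
    consider "a = 1" | "2 \<le> a \<and> a \<le> n - 3" | "a = n - 2" | "a = n - 1" using ab by linarith
    then show ?thesis
    proof cases
      case 1
      show ?thesis
      proof (cases "b = 2")
        case True
        have "lcomb (thm_spec n \<alpha> \<gamma> \<beta> 1 2) e ?I = vzero" by (rule lcomb_zero) (use ts_1[OF n6, of \<alpha> \<gamma> \<beta> 2] in simp)
        then show ?thesis unfolding 1 True e1e2 by simp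
      next
        case False
        then have b3: "3 \<le> b" using 1 ab by simp
        show ?thesis unfolding 1 ad_e1[OF ad b3 ab(3)] ts_1[OF n6] lcomb_def
        proof
          fix j
          have "(\<Sum>k\<in>?I. (if 3 \<le> b \<and> k = b - 1 then 1 else 0) * e k j) = (\<Sum>k\<in>?I. if k = b - 1 then e k j else 0)"
            using b3 by (intro sum.cong) auto
          also have "\<dots> = e (b-1) j"
          proof -
            have "b - 1 \<in> ?I" using b3 ab by auto
            then show ?thesis by (simp add: sum.delta')
          qed
          finally show "e (b - 1) j = (\<Sum>k\<in>?I. (if 3 \<le> b \<and> k = b - 1 then 1 else 0) * e k j)" by simp
        qed
      qed
    next
      case 2
      then have "a \<noteq> 1" "a \<noteq> n-2" "a \<noteq> n-1" using n6 by auto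
      then have "lcomb (thm_spec n \<alpha> \<gamma> \<beta> a b) e ?I = vzero" by (intro lcomb_zero ts_mid[OF n6])
      moreover have "B (e a) (e b) = vzero" using zero_br[of a b] 2 ab by simp
      ultimately show ?thesis by simp
    next
      case 3
      then have "b = n - 1 \<or> b = n" using ab by auto
      then show ?thesis
      proof
        assume b: "b = n - 1"
        show ?thesis unfolding 3 b hX ts_X[OF n6] using cXv by (intro lcomb_cong) auto
      next
        assume b: "b = n"
        show ?thesis unfolding 3 b hY ts_Y[OF n6] using cYv by (intro lcomb_cong) auto
      qed
    next
      case 4
      then have b: "b = n" using ab by auto
      show ?thesis unfolding 4 b hZ ts_Z[OF n6] using cZv by (intro lcomb_cong) auto
    qed
  qed
  show ?thesis using a0 main by blast
qed

end


lemma sc_addl: "sc_bracket n c (vadd x y) z = vadd (sc_bracket n c x z) (sc_bracket n c y z)"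
  unfolding sc_bracket_def vadd_def by (rule ext) (simp add: algebra_simps sum.distrib)
lemma sc_addr: "sc_bracket n c z (vadd x y) = vadd (sc_bracket n c z x) (sc_bracket n c z y)"
  unfolding sc_bracket_def vadd_def by (rule ext) (simp add: algebra_simps sum.distrib)
lemma sc_smull: "sc_bracket n c (smul a x) y = smul a (sc_bracket n c x y)"
  unfolding sc_bracket_def smul_def by (rule ext) (simp add: algebra_simps sum_distrib_left)
lemma sc_smulr: "sc_bracket n c x (smul a y) = smul a (sc_bracket n c x y)"
  unfolding sc_bracket_def smul_def by (rule ext) (simp add: algebra_simps sum_distrib_left)
lemma sc_vsp: "sc_bracket n c x y \<in> vsp n"
  unfolding sc_bracket_def vsp_def by auto

definition ub :: "nat \<Rightarrow> cvec" where "ub a = (\<lambda>i. if i = a then 1 else 0)"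

lemma delta_mult: "(if P then (1::complex) else 0) * z = (if P then z else 0)" by simp
lemma if0_mult: "(if P then A else (0::complex)) * z = (if P then A * z else 0)" by simp

lemma sc_ub:
  assumes "a \<in> {1..n}" "b \<in> {1..n}"
  shows "sc_bracket n c (ub a) (ub b) = (\<lambda>k. if 1 \<le> k \<and> k \<le> n then c a b k else 0)"
proof
  fix k
  have pt: "ub a i * ub b j * c i j k = (if i = a then (if j = b then c a b k else 0) else 0)" for i j
    unfolding ub_def by simp
  have "(\<Sum>i\<in>{1..n}. \<Sum>j\<in>{1..n}. ub a i * ub b j * c i j k) =
        (\<Sum>i\<in>{1..n}. if i = a then (\<Sum>j\<in>{1..n}. if j = b then c a b k else 0) else 0)"
    unfolding pt by (intro sum.cong refl) simp
  also have "\<dots> = c a b k" using assms by (simp add: sum.delta')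
  finally show "sc_bracket n c (ub a) (ub b) k = (if 1 \<le> k \<and> k \<le> n then c a b k else 0)"
    unfolding sc_bracket_def by simp
qed

lemma ub_inj: "inj_on ub A"
proof
  fix a b assume "ub a = ub b"
  then have "ub a a = ub b a" by simp
  then show "a = b" unfolding ub_def by (simp split: if_splits)
qed

definition supp :: "nat \<Rightarrow> nat \<Rightarrow> cvec set" where
  "supp a b = {v. \<forall>i. v i \<noteq> 0 \<longrightarrow> a \<le> i \<and> i \<le> b}"

lemma vsp_supp: "vsp n = supp 1 n" unfolding vsp_def supp_def by simp

lemma supp_lcomb: "F \<subseteq> supp a b \<Longrightarrow> lcomb c id F \<in> supp a b"
  unfolding supp_def lcomb_def
proof (clarsimp)
  fix i assume h: "F \<subseteq> {v. \<forall>i. v i \<noteq> 0 \<longrightarrow> a \<le> i \<and> i \<le> b}"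
    and s: "(\<Sum>x\<in>F. c x * x i) \<noteq> 0"
  show "a \<le> i \<and> i \<le> b"
  proof (rule ccontr)
    assume "\<not> (a \<le> i \<and> i \<le> b)"
    then have "\<forall>x\<in>F. x i = 0" using h by auto
    then have "(\<Sum>x\<in>F. c x * x i) = 0" by (intro sum.neutral) simp
    then show False using s by simp
  qed
qed

lemma cspan_supp_sub: "S \<subseteq> supp a b \<Longrightarrow> cspan S \<subseteq> supp a b"
  unfolding cspan_def using supp_lcomb by blast

lemma supp_rep: "v \<in> supp a b \<Longrightarrow> v = lcomb v ub {a..b}"
proof
  fix i assume v: "v \<in> supp a b"
  have "lcomb v ub {a..b} i = (\<Sum>k\<in>{a..b}. if i = k then v k else 0)"
    unfolding lcomb_def ub_def by (intro sum.cong) auto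
  also have "\<dots> = (if i \<in> {a..b} then v i else 0)" by (simp add: sum.delta)
  also have "\<dots> = v i" using v unfolding supp_def by auto
  finally show "v i = lcomb v ub {a..b} i" by simp
qed

lemma ub_supp: "j \<in> {a..b} \<Longrightarrow> ub j \<in> supp a b" unfolding ub_def supp_def by auto

lemma cspan_ub: "cspan (ub ` {a..b}) = supp a b"
proof
  show "cspan (ub ` {a..b}) \<subseteq> supp a b" using ub_supp by (intro cspan_supp_sub) blast
  show "supp a b \<subseteq> cspan (ub ` {a..b})"
  proof
    fix v assume "v \<in> supp a b"
    then have "v = lcomb v ub {a..b}" by (rule supp_rep)
    also have "\<dots> \<in> cspan (ub ` {a..b})" by (rule lcomb_in_cspan) (auto intro: ub_inj)
    finally show "v \<in> cspan (ub ` {a..b})" .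
  qed
qed

lemma cindep_ub: "cindep (ub ` A)"
  unfolding cindep_def
proof (intro allI impI ballI)
  fix F c x assume h: "finite F \<and> F \<subseteq> ub ` A \<and> lcomb c id F = vzero" and x: "x \<in> F"
  then obtain j where j: "x = ub j" by blast
  have "(\<Sum>y\<in>F. c y * y j) = (\<Sum>y\<in>F. if y = x then c y else 0)"
  proof (intro sum.cong refl)
    fix y assume y: "y \<in> F"
    then obtain j' where j': "y = ub j'" using h by blast
    show "c y * y j = (if y = x then c y else 0)"
    proof (cases "j' = j")
      case True then show ?thesis unfolding j j' by (simp add: ub_def)
    next
      case False
      then have "y j = 0" "x j = 1" unfolding j j' ub_def by auto
      then have "y \<noteq> x" by auto
      then show ?thesis using \<open>y j = 0\<close> by simp
    qed
  qed
  also have "\<dots> = c x" using h x by (simp add: sum.delta')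
  finally have "lcomb c id F j = c x" unfolding lcomb_def by simp
  then show "c x = 0" using h unfolding vzero_def by simp
qed

lemma has_cdim_supp: "has_cdim (supp a b) (b + 1 - a)"
  unfolding has_cdim_def
proof (intro exI conjI)
  show "finite (ub ` {a..b})" by simp
  show "card (ub ` {a..b}) = b + 1 - a" using ub_inj by (simp add: card_image)
  show "ub ` {a..b} \<subseteq> supp a b" using ub_supp by blast
  show "cindep (ub ` {a..b})" by (rule cindep_ub)
  show "cspan (ub ` {a..b}) = supp a b" by (rule cspan_ub)
qed

context
  fixes n :: nat and \<alpha> \<gamma> \<beta> :: complex
  assumes n6: "n \<ge> 6"
begin

abbreviation "BB \<equiv> sc_bracket n (antisym_sc (thm_spec n \<alpha> \<gamma> \<beta>))"

lemma BB_brf: "BB x y = brf n \<alpha> \<gamma> \<beta> x y" by (rule sc_closed[OF n6])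

lemma BB_lie: "lie_alg n BB"
  unfolding lie_alg_def
proof (intro conjI ballI allI)
  fix x y z
  show "BB x y \<in> vsp n" by (rule sc_vsp)
  show "BB (vadd x y) z = vadd (BB x z) (BB y z)" by (rule sc_addl)
  show "BB z (vadd x y) = vadd (BB z x) (BB z y)" by (rule sc_addr)
  fix c
  show "BB (smul c x) y = smul c (BB x y)" by (rule sc_smull)
  show "BB x (smul c y) = smul c (BB x y)" by (rule sc_smulr)
next
  fix x
  show "BB x x = vzero" unfolding BB_brf brf_def vzero_def by (rule ext) simp
next
  fix x y z
  show "vadd (BB x (BB y z)) (vadd (BB y (BB z x)) (BB z (BB x y))) = vzero"
    unfolding BB_brf vadd_def vzero_def using brf_jacobi[OF n6] by (intro ext) simp
qed

end


definition lo :: "nat \<Rightarrow> nat" where "lo m = (if m \<le> 1 then 1 else 2)"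

context
  fixes n :: nat and \<alpha> \<gamma> \<beta> :: complex
  assumes n6: "n \<ge> 6"
begin

abbreviation "BC \<equiv> sc_bracket n (antisym_sc (thm_spec n \<alpha> \<gamma> \<beta>))"

lemma ub_vsp: "1 \<le> i \<Longrightarrow> i \<le> n \<Longrightarrow> ub i \<in> vsp n" unfolding vsp_supp by (rule ub_supp) simp

lemma ub_down:
  assumes "2 \<le> j" "j + 1 \<le> n"
  shows "BC (ub (j+1)) (smul (-1) (ub 1)) = ub j"
proof
  fix k
  have "BC (ub (j+1)) (smul (-1) (ub 1)) = smul (-1) (BC (ub (j+1)) (ub 1))" by (rule sc_smulr)
  also have "BC (ub (j+1)) (ub 1) = (\<lambda>k. if 1 \<le> k \<and> k \<le> n then antisym_sc (thm_spec n \<alpha> \<gamma> \<beta>) (j+1) 1 k else 0)"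
    using assms by (intro sc_ub) auto
  finally have "BC (ub (j+1)) (smul (-1) (ub 1)) k = - (if 1 \<le> k \<and> k \<le> n then - thm_spec n \<alpha> \<gamma> \<beta> 1 (j+1) k else 0)"
    unfolding antisym_sc_def smul_def using assms by simp
  also have "\<dots> = ub j k" unfolding ts_1[OF n6] ub_def using assms by auto
  finally show "BC (ub (j+1)) (smul (-1) (ub 1)) k = ub j k" .
qed

lemma brf_supp:
  assumes m: "1 \<le> m" "m + 1 \<le> n" and x: "x \<in> supp (lo m) (n+1-m)"
  shows "brf n \<alpha> \<gamma> \<beta> x y \<in> supp 2 (n-m)"
  unfolding supp_def
proof (clarify)
  fix i assume nz: "brf n \<alpha> \<gamma> \<beta> x y i \<noteq> 0"
  have xz: "x j = 0" if "\<not> (lo m \<le> j \<and> j \<le> n+1-m)" for j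
    using x that unfolding supp_def by auto
  show "2 \<le> i \<and> i \<le> n - m"
  proof (rule ccontr)
    assume c: "\<not> (2 \<le> i \<and> i \<le> n - m)"
    have "brf n \<alpha> \<gamma> \<beta> x y i = 0"
    proof (cases "1 \<le> i \<and> i \<le> n")
      case False then show ?thesis unfolding brf_def by auto
    next
      case True
      consider "i = 1" | "i = 2" | "i = 3" | "i = 4" | "5 \<le> i" using True by linarith
      then show ?thesis
      proof cases
        case 1 then show ?thesis using brf_1 by simp
      next
        case 2
        then have m2: "m \<ge> n - 1" using c n6 by auto
        have lm: "lo m = 2" using m2 n6 unfolding lo_def by auto
        have z: "x 1 = 0" "x 3 = 0" "x (n-2) = 0" "x (n-1) = 0" "x n = 0"
          by (rule xz; use lm m2 m n6 in arith)+
        show ?thesis unfolding 2 brf_def ca_def cg_def cb_def using z by simp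
      next
        case 3
        then have m2: "m \<ge> n - 2" using c n6 by auto
        have lm: "lo m = 2" using m2 n6 unfolding lo_def by auto
        have z: "x 1 = 0" "x 4 = 0" "x (n-2) = 0" "x (n-1) = 0" "x n = 0"
          by (rule xz; use lm m2 m n6 in arith)+
        show ?thesis unfolding 3 brf_def ca_def cg_def cb_def using z by simp
      next
        case 4
        then have m2: "m \<ge> n - 3" using c n6 by auto
        have lm: "lo m = 2" using m2 n6 unfolding lo_def by auto
        have z: "x 1 = 0" "x 5 = 0" "x (n-1) = 0" "x n = 0"
          by (rule xz; use lm m2 m n6 in arith)+
        show ?thesis unfolding 4 brf_def ca_def cg_def cb_def using z by simp
      next
        case 5
        have e: "brf n \<alpha> \<gamma> \<beta> x y i = (if 2 \<le> i \<and> i+1 \<le> n then x 1 * y (i+1) - y 1 * x (i+1) else 0)"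
          unfolding brf_def ca_def cg_def cb_def using 5 True by simp
        show ?thesis
        proof (cases "i + 1 \<le> n")
          case False then show ?thesis unfolding e by simp
        next
          case T: True
          then have "m \<ge> 2" using c 5 by auto
          then have lm: "lo m = 2" unfolding lo_def by auto
          have "x 1 = 0" "x (i+1) = 0" by (rule xz; use lm c 5 T m in arith)+
          then show ?thesis unfolding e by simp
        qed
      qed
    qed
    then show False using nz by simp
  qed
qed

lemma lcs_step:
  assumes m: "1 \<le> m" "m + 1 \<le> n"
  shows "cspan {BC x y | x y. x \<in> supp (lo m) (n+1-m) \<and> y \<in> vsp n} = supp 2 (n-m)"
proof
  show "cspan {BC x y | x y. x \<in> supp (lo m) (n+1-m) \<and> y \<in> vsp n} \<subseteq> supp 2 (n-m)"
    using brf_supp[OF m] BB_brf[OF n6] by (intro cspan_supp_sub) auto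
  show "supp 2 (n-m) \<subseteq> cspan {BC x y | x y. x \<in> supp (lo m) (n+1-m) \<and> y \<in> vsp n}"
  proof
    fix v assume "v \<in> supp 2 (n-m)"
    then have "v = lcomb v ub {2..n-m}" by (rule supp_rep)
    also have "\<dots> \<in> cspan {BC x y | x y. x \<in> supp (lo m) (n+1-m) \<and> y \<in> vsp n}"
    proof (rule lcomb_in_cspan)
      show "inj_on ub {2..n-m}" by (rule ub_inj)
      show "ub ` {2..n-m} \<subseteq> {BC x y | x y. x \<in> supp (lo m) (n+1-m) \<and> y \<in> vsp n}"
      proof
        fix w assume "w \<in> ub ` {2..n-m}"
        then obtain j where j: "j \<in> {2..n-m}" "w = ub j" by blast
        have "j + 1 \<le> n" "2 \<le> j" using j m by auto
        then have "BC (ub (j+1)) (smul (-1) (ub 1)) = ub j" by (rule ub_down[rotated])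
        then have "w = BC (ub (j+1)) (smul (-1) (ub 1))" using j by simp
        moreover have "ub (j+1) \<in> supp (lo m) (n+1-m)" using j m unfolding lo_def by (intro ub_supp) auto
        moreover have "smul (-1) (ub 1) \<in> vsp n" using ub_vsp[of 1] n6 by (intro vsp_smul) auto
        ultimately show "w \<in> {BC x y | x y. x \<in> supp (lo m) (n+1-m) \<and> y \<in> vsp n}" by blast
      qed
    qed simp
    finally show "v \<in> cspan {BC x y | x y. x \<in> supp (lo m) (n+1-m) \<and> y \<in> vsp n}" .
  qed
qed

lemma lcs_eq: "1 \<le> m \<Longrightarrow> m \<le> n \<Longrightarrow> lcs n BC m = supp (lo m) (n+1-m)"
proof (induction m)
  case 0 then show ?case by simp
next
  case (Suc m)
  show ?case
  proof (cases m)
    case 0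
    have "lo (Suc m) = 1" unfolding lo_def using 0 by simp
    then show ?thesis using vsp_supp 0 by simp
  next
    case (Suc m')
    have "lcs n BC (Suc m) = cspan {BC x y | x y. x \<in> lcs n BC m \<and> y \<in> vsp n}"
      unfolding Suc by simp
    also have "lcs n BC m = supp (lo m) (n+1-m)" using Suc.IH Suc.prems Suc by simp
    also have "cspan {BC x y | x y. x \<in> supp (lo m) (n+1-m) \<and> y \<in> vsp n} = supp 2 (n-m)"
      using lcs_step[of m] Suc.prems Suc by simp
    also have "supp 2 (n-m) = supp (lo (Suc m)) (n+1 - Suc m)" unfolding lo_def using Suc by simp
    finally show ?thesis .
  qed
qed

lemma BC_filiform: "filiform n BC"
  unfolding filiform_def
proof (intro conjI allI impI)
  show "2 \<le> n" using n6 by simp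
  show "lie_alg n BC" by (rule BB_lie[OF n6])
  fix k assume k: "2 \<le> k \<and> k \<le> n"
  have "lcs n BC k = supp 2 (n+1-k)" using lcs_eq[of k] k unfolding lo_def by simp
  moreover have "n + 1 - k + 1 - 2 = n - k" using k by simp
  ultimately show "has_cdim (lcs n BC k) (n - k)" using has_cdim_supp[of 2 "n+1-k"] by simp
qed

lemma ub_val:
  assumes "a \<in> {1..n}" "b \<in> {1..n}" "1 \<le> k" "k \<le> n"
  shows "BC (ub a) (ub b) k = thm_spec n \<alpha> \<gamma> \<beta> a b k - thm_spec n \<alpha> \<gamma> \<beta> b a k"
  using sc_ub[OF assms(1,2)] assms antisym_eq[OF n6] by simp

lemma ub_zero:
  assumes "a \<in> {1..n}" "b \<in> {1..n}" "\<And>k. thm_spec n \<alpha> \<gamma> \<beta> a b k = 0" "\<And>k. thm_spec n \<alpha> \<gamma> \<beta> b a k = 0"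
  shows "BC (ub a) (ub b) = vzero"
  using sc_ub[OF assms(1,2)] assms antisym_eq[OF n6] unfolding vzero_def by auto

lemma ts_lt0: "\<not> a < b \<Longrightarrow> thm_spec n \<alpha> \<gamma> \<beta> a b k = 0"
  using thm_spec_lt[OF n6] by blast

lemma XY_val: "BC (ub (n-2)) (ub (n-1)) 2 = \<alpha>" "BC (ub (n-2)) (ub n) 3 = \<alpha>"
proof -
  show "BC (ub (n-2)) (ub (n-1)) 2 = \<alpha>"
    using ub_val[of "n-2" "n-1" 2] n6 ts_X[OF n6] ts_lt0[of "n-1" "n-2"] by simp
  show "BC (ub (n-2)) (ub n) 3 = \<alpha>"
    using ub_val[of "n-2" "n" 3] n6 ts_Y[OF n6] ts_lt0[of "n" "n-2"] by simp
qed

end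


lemma model_eq: "n \<ge> 6 \<Longrightarrow> model_br n = brf n 0 0 0"
proof -
  assume n: "n \<ge> 6"
  have "model_spec = thm_spec n 0 0 0" unfolding model_spec_def thm_spec_def by (intro ext) (simp only: if_cancel)
  then show ?thesis unfolding model_br_def using sc_closed[OF n, of 0 0 0] by (intro ext) simp
qed

lemma brf0_zero: "x 1 = 0 \<Longrightarrow> y 1 = 0 \<Longrightarrow> brf n 0 0 0 x y = vzero"
  unfolding brf_def ca_def cg_def cb_def vzero_def by (intro ext) simp

lemma brf_Suc0: "brf n \<alpha> \<gamma> \<beta> x y (Suc 0) = 0" using brf_1 by simp

lemma brf0_MM: "brf n 0 0 0 (brf n 0 0 0 a b) (brf n 0 0 0 c d) = vzero"
  by (rule brf0_zero) (simp_all add: brf_Suc0)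

context
  fixes n :: nat and \<alpha> \<gamma> \<beta> :: complex
  assumes n6: "n \<ge> 6" and a0: "\<alpha> \<noteq> 0"
begin

abbreviation "BD \<equiv> sc_bracket n (antisym_sc (thm_spec n \<alpha> \<gamma> \<beta>))"

lemma BD_non_model: "non_model n BD"
  unfolding non_model_def
proof
  assume "\<exists>f. lie_iso n BD (model_br n) f"
  then obtain f where f: "lie_iso n BD (model_br n) f" by blast
  have bij: "bij_betw f (vsp n) (vsp n)" using f unfolding lie_iso_def by blast
  have hom: "\<And>x y. x \<in> vsp n \<Longrightarrow> y \<in> vsp n \<Longrightarrow> f (BD x y) = brf n 0 0 0 (f x) (f y)"
    using f model_eq[OF n6] unfolding lie_iso_def by simp
  have lin: "\<And>c x. x \<in> vsp n \<Longrightarrow> f (smul c x) = smul c (f x)" using f unfolding lie_iso_def by blast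
  have f0: "f vzero = vzero"
    using lin[of vzero 0] by (simp add: smul0)
  define w where "w = smul (-1) (ub 1)"
  have wv: "w \<in> vsp n" unfolding w_def using ub_vsp[OF n6, of 1] n6 by (intro vsp_smul) auto
  have u1: "ub (n-1) \<in> vsp n" "ub n \<in> vsp n" using ub_vsp[OF n6] n6 by auto
  have b1: "BD (ub (n-1)) w = ub (n-2)"
  proof -
    have "BD (ub (n-2+1)) (smul (-1) (ub 1)) = ub (n-2)" by (rule ub_down[OF n6]) (use n6 in auto)
    then show ?thesis unfolding w_def nf(11)[OF n6] .
  qed
  have b2: "BD (ub n) w = ub (n-1)"
  proof -
    have "BD (ub (n-1+1)) (smul (-1) (ub 1)) = ub (n-1)" by (rule ub_down[OF n6]) (use n6 in auto)
    then show ?thesis unfolding w_def nf(10)[OF n6] .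
  qed
  have v1: "BD (ub (n-1)) w \<in> vsp n" "BD (ub n) w \<in> vsp n" by (simp_all add: sc_vsp)
  have "f (BD (BD (ub (n-1)) w) (BD (ub n) w)) = brf n 0 0 0 (f (BD (ub (n-1)) w)) (f (BD (ub n) w))"
    using hom v1 by blast
  also have "\<dots> = brf n 0 0 0 (brf n 0 0 0 (f (ub (n-1))) (f w)) (brf n 0 0 0 (f (ub n)) (f w))"
    using hom u1 wv by simp
  also have "\<dots> = vzero" by (rule brf0_MM)
  finally have "f (BD (BD (ub (n-1)) w) (BD (ub n) w)) = f vzero" using f0 by simp
  then have "BD (BD (ub (n-1)) w) (BD (ub n) w) = vzero"
    using inj_onD[OF bij_betw_imp_inj_on[OF bij] _ sc_vsp vsp_vzero] by blast
  then have "BD (ub (n-2)) (ub (n-1)) 2 = 0" unfolding b1 b2 vzero_def by simp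
  then show False using XY_val[OF n6] a0 by simp
qed

lemma BD_adapted: "adapted_basis n BD ub"
  unfolding adapted_basis_def
proof (intro conjI ballI allI impI)
  fix i assume "i \<in> {1..n}" then show "ub i \<in> vsp n" using ub_vsp[OF n6] by auto
next
  show "inj_on ub {1..n}" by (rule ub_inj)
  show "cindep (ub ` {1..n})" by (rule cindep_ub)
  show "cspan (ub ` {1..n}) = vsp n" using cspan_ub vsp_supp by simp
next
  fix h assume h: "3 \<le> h \<and> h \<le> n"
  show "BD (ub 1) (ub h) = ub (h - 1)"
  proof
    fix k
    have "BD (ub 1) (ub h) k = (if 1 \<le> k \<and> k \<le> n then antisym_sc (thm_spec n \<alpha> \<gamma> \<beta>) 1 h k else 0)"
      using sc_ub[of 1 n h] h by simp
    also have "\<dots> = (if 1 \<le> k \<and> k \<le> n then (if k = h - 1 then 1 else 0) else 0)"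
      unfolding antisym_sc_def ts_1[OF n6] using h by simp
    also have "\<dots> = ub (h-1) k" unfolding ub_def using h by auto
    finally show "BD (ub 1) (ub h) k = ub (h - 1) k" .
  qed
next
  fix h assume h: "1 \<le> h \<and> h \<le> n"
  show "BD (ub 2) (ub h) = vzero"
  proof (rule ub_zero[OF n6])
    show "2 \<in> {1..n}" "h \<in> {1..n}" using h n6 by auto
    fix k
    show "thm_spec n \<alpha> \<gamma> \<beta> 2 h k = 0" using n6 by (intro ts_mid) auto
    show "thm_spec n \<alpha> \<gamma> \<beta> h 2 k = 0"
    proof (cases "h = 1")
      case True then show ?thesis using ts_1[OF n6] by simp
    next
      case False then show ?thesis using h by (intro ts_lt0[OF n6]) auto
    qed
  qed
next
  fix h assume h: "2 \<le> h \<and> h \<le> n"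
  show "BD (ub 3) (ub h) = vzero"
  proof (rule ub_zero[OF n6])
    show "3 \<in> {1..n}" "h \<in> {1..n}" using h n6 by auto
    fix k
    show "thm_spec n \<alpha> \<gamma> \<beta> 3 h k = 0" using n6 by (intro ts_mid) auto
    show "thm_spec n \<alpha> \<gamma> \<beta> h 3 k = 0"
    proof (cases "h = 2")
      case True then show ?thesis using n6 by (intro ts_mid) auto
    next
      case False then show ?thesis using h by (intro ts_lt0[OF n6]) auto
    qed
  qed
qed

lemma BD_z1: "is_z1 n BD ub (n-2)"
  unfolding is_z1_def
proof (intro conjI allI impI)
  show "4 \<le> n - 2" using n6 by simp
  show "BD (ub (n - 2)) (ub n) \<noteq> vzero"
  proof
    assume "BD (ub (n - 2)) (ub n) = vzero"
    then have "BD (ub (n - 2)) (ub n) 3 = 0" unfolding vzero_def by simp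
    then show False using XY_val[OF n6] a0 by simp
  qed
  fix k assume k: "4 \<le> k \<and> k < n - 2"
  show "BD (ub k) (ub n) = vzero"
  proof (rule ub_zero[OF n6])
    show "k \<in> {1..n}" "n \<in> {1..n}" using k n6 by auto
    fix j
    show "thm_spec n \<alpha> \<gamma> \<beta> k n j = 0" using n6 k by (intro ts_mid) auto
    show "thm_spec n \<alpha> \<gamma> \<beta> n k j = 0" using k by (intro ts_lt0[OF n6]) auto
  qed
qed

lemma BD_z2: "is_z2 n BD ub (n-2)"
  unfolding is_z2_def
proof (intro conjI allI impI)
  show "4 \<le> n - 2" using n6 by simp
  show "BD (ub (n - 2)) (ub (n - 2 + 1)) \<noteq> vzero"
  proof
    assume "BD (ub (n - 2)) (ub (n - 2 + 1)) = vzero"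
    then have "BD (ub (n - 2)) (ub (n - 1)) 2 = 0" unfolding vzero_def nf(11)[OF n6] by simp
    then show False using XY_val[OF n6] a0 by simp
  qed
  fix k assume k: "4 \<le> k \<and> k < n - 2"
  show "BD (ub k) (ub (k+1)) = vzero"
  proof (rule ub_zero[OF n6])
    show "k \<in> {1..n}" "k + 1 \<in> {1..n}" using k n6 by auto
    fix j
    show "thm_spec n \<alpha> \<gamma> \<beta> k (k+1) j = 0" using n6 k by (intro ts_mid) auto
    show "thm_spec n \<alpha> \<gamma> \<beta> (k+1) k j = 0" by (intro ts_lt0[OF n6]) auto
  qed
qed

lemma BD_assoc: "assoc_triple n BD (n-2) (n-2)"
  unfolding assoc_triple_def using BC_filiform[OF n6] BD_non_model BD_adapted BD_z1 BD_z2 by blast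

end

theorem mainTheorem3:
  fixes n :: nat
  assumes "n \<ge> 6"
  shows "(\<forall>B. assoc_triple n B (n - 2) (n - 2) \<longrightarrow>
            (\<exists>e \<alpha> \<gamma> \<beta>. adapted_basis n B e \<and> \<alpha> \<noteq> 0 \<and>
               (\<forall>a b. 1 \<le> a \<and> a < b \<and> b \<le> n \<longrightarrow>
                  B (e a) (e b) = lcomb (thm_spec n \<alpha> \<gamma> \<beta> a b) e {1..n})))
       \<and> (\<forall>\<alpha> \<gamma> \<beta>. \<alpha> \<noteq> 0 \<longrightarrow>
            assoc_triple n (sc_bracket n (antisym_sc (thm_spec n \<alpha> \<gamma> \<beta>))) (n - 2) (n - 2))"
proof (intro conjI allI impI)
  fix B assume "assoc_triple n B (n - 2) (n - 2)"
  then obtain e where L: "lie_alg n B" and e: "adapted_basis n B e" "is_z1 n B e (n-2)" "is_z2 n B e (n-2)"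
    unfolding assoc_triple_def filiform_def by blast
  interpret fwd n B e using assms L e by unfold_locales
  show "\<exists>e \<alpha> \<gamma> \<beta>. adapted_basis n B e \<and> \<alpha> \<noteq> 0 \<and>
               (\<forall>a b. 1 \<le> a \<and> a < b \<and> b \<le> n \<longrightarrow>
                  B (e a) (e b) = lcomb (thm_spec n \<alpha> \<gamma> \<beta> a b) e {1..n})"
    using fwd_main e(1) by blast
next
  fix \<alpha> \<gamma> \<beta> :: complex assume "\<alpha> \<noteq> 0"
  then show "assoc_triple n (sc_bracket n (antisym_sc (thm_spec n \<alpha> \<gamma> \<beta>))) (n - 2) (n - 2)"
    using BD_assoc[OF assms] by blast
qed


end
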